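(* For every integer $N\ge 0$, let $T(N)$ be the number of tilings of a $3\times 3\times n$ box, $n=2N/3$, by $N$ bricks of size $1\times 2\times 3$ (and $0$ if $3\nmid N$). Then, as formal power series, \[ \sum_{N\ge 0} T(N)\,z^N=\frac{1-z^3}{1-7z^3-22z^6-36z^9}. \]
   Context: A tiling of a $k\times m\times n$ box (made of $kmn$ unit cubes) by $a\times b\times c$ bricks is a partition of the box into non-overlapping axis-parallel boxes with integer corner coordinates, each congruent (by an axis-permuting placement) to the $a\times b\times c$ brick; all orientations are allowed. Tilings related by symmetries of the box are counted as distinct. The empty tiling counts once for $N=0$. *)

theory Defs
  imports "HOL-Computational_Algebra.Formal_Power_Series"
begin

text \<open>Unit cubes of a box are indexed by their lower corners (x,y,z).\<close>

definition box_cells :: "nat \<Rightarrow> nat \<Rightarrow> nat \<Rightarrow> (nat \<times> nat \<times> nat) set" where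
  "box_cells k m n = {0..<k} \<times> {0..<m} \<times> {0..<n}"

definition brick_at :: "nat \<Rightarrow> nat \<Rightarrow> nat \<Rightarrow> nat \<Rightarrow> nat \<Rightarrow> nat \<Rightarrow> (nat \<times> nat \<times> nat) set" where
  "brick_at x y z d1 d2 d3 = {x..<x+d1} \<times> {y..<y+d2} \<times> {z..<z+d3}"

definition is_orientation :: "nat \<Rightarrow> nat \<Rightarrow> nat \<Rightarrow> nat \<Rightarrow> nat \<Rightarrow> nat \<Rightarrow> bool" where
  "is_orientation a b c d1 d2 d3 \<longleftrightarrow>
     (d1, d2, d3) \<in> {(a,b,c), (a,c,b), (b,a,c), (b,c,a), (c,a,b), (c,b,a)}"

definition is_brick :: "nat \<Rightarrow> nat \<Rightarrow> nat \<Rightarrow> (nat \<times> nat \<times> nat) set \<Rightarrow> bool" where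
  "is_brick a b c B \<longleftrightarrow>
     (\<exists>x y z d1 d2 d3. is_orientation a b c d1 d2 d3 \<and> B = brick_at x y z d1 d2 d3)"

text \<open>Tilings are counted as
  distinct sets of bricks (box symmetries are not factored out).\<close>

definition tilings :: "nat \<Rightarrow> nat \<Rightarrow> nat \<Rightarrow> nat \<Rightarrow> nat \<Rightarrow> nat \<Rightarrow> (nat \<times> nat \<times> nat) set set set" where
  "tilings k m n a b c =
     {P. (\<forall>B\<in>P. is_brick a b c B)
       \<and> (\<forall>B\<in>P. \<forall>C\<in>P. B \<noteq> C \<longrightarrow> B \<inter> C = {})
       \<and> \<Union>P = box_cells k m n}"

definition T :: "nat \<Rightarrow> nat" where
  "T N = (if 3 dvd N then card {P \<in> tilings 3 3 (2 * N div 3) 1 2 3. card P = N} else 0)"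

end

theory Submission
  imports Defs "HOL-Library.Product_Lexorder" "HOL-Library.List_Lexorder"
begin

unbundle fps_syntax


type_synonym cell = "nat \<times> nat \<times> nat"

definition tilesof :: "cell set \<Rightarrow> cell set set set" where
  "tilesof A = {P. (\<forall>B\<in>P. is_brick 1 2 3 B) \<and> (\<forall>B\<in>P. \<forall>C\<in>P. B \<noteq> C \<longrightarrow> B \<inter> C = {}) \<and> \<Union>P = A}"

definition tc :: "cell set \<Rightarrow> nat" where "tc A = card (tilesof A)"

lemma brick_ne: "is_brick 1 2 3 B \<Longrightarrow> B \<noteq> {}"
  by (auto simp: is_brick_def is_orientation_def brick_at_def)

lemma tilesof_empty: "tilesof {} = {{}}"
  using brick_ne by (auto simp: tilesof_def)

lemma tc_empty: "tc {} = 1"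
  by (simp add: tc_def tilesof_empty)

lemma finite_tilesof: "finite A \<Longrightarrow> finite (tilesof A)"
  by (rule finite_subset[of _ "Pow (Pow A)"]) (auto simp: tilesof_def)

lemma tc_split:
  assumes fin: "finite A" and c: "c \<in> A"
  shows "tc A = (\<Sum>B\<in>{B. is_brick 1 2 3 B \<and> c \<in> B \<and> B \<subseteq> A}. tc (A - B))"
proof -
  define Bs where "Bs = {B. is_brick 1 2 3 B \<and> c \<in> B \<and> B \<subseteq> A}"
  have eq: "tilesof A = (\<Union>B\<in>Bs. insert B ` tilesof (A - B))"
  proof
    show "tilesof A \<subseteq> (\<Union>B\<in>Bs. insert B ` tilesof (A - B))"
    proof
      fix P assume P: "P \<in> tilesof A"
      then obtain B where B: "B \<in> P" "c \<in> B" using c by (auto simp: tilesof_def)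
      have "B \<in> Bs" using P B by (auto simp: tilesof_def Bs_def)
      moreover have "P - {B} \<in> tilesof (A - B)"
        using P B by (auto simp: tilesof_def)
      moreover have "P = insert B (P - {B})" using B by auto
      ultimately show "P \<in> (\<Union>B\<in>Bs. insert B ` tilesof (A - B))" by blast
    qed
  next
    show "(\<Union>B\<in>Bs. insert B ` tilesof (A - B)) \<subseteq> tilesof A"
    proof (clarify)
      fix B P assume B: "B \<in> Bs" and P: "P \<in> tilesof (A - B)"
      have b: "is_brick 1 2 3 B" "B \<subseteq> A" using B by (auto simp: Bs_def)
      have p: "\<forall>C\<in>P. is_brick 1 2 3 C" "\<forall>C\<in>P. \<forall>D\<in>P. C \<noteq> D \<longrightarrow> C \<inter> D = {}" "\<Union>P = A - B"
        using P by (auto simp: tilesof_def)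
      have d: "\<forall>C\<in>P. B \<inter> C = {}" using p(3) by auto
      show "insert B P \<in> tilesof A"
        unfolding tilesof_def using b p d by auto
    qed
  qed
  have finBs: "finite Bs" by (rule finite_subset[of _ "Pow A"]) (use fin in \<open>auto simp: Bs_def\<close>)
  have inj: "inj_on (insert B) (tilesof (A - B))" if "B \<in> Bs" for B
  proof (rule inj_onI)
    fix P Q assume P: "P \<in> tilesof (A - B)" and Q: "Q \<in> tilesof (A - B)" and e: "insert B P = insert B Q"
    have ne: "B \<noteq> {}" using that brick_ne by (auto simp: Bs_def)
    have "B \<notin> P" using P ne by (auto simp: tilesof_def)
    moreover have "B \<notin> Q" using Q ne by (auto simp: tilesof_def)
    ultimately show "P = Q" using e by (metis insert_ident)
  qed
  have "tc A = (\<Sum>B\<in>Bs. card (insert B ` tilesof (A - B)))"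
    unfolding tc_def eq
  proof (rule card_UN_disjoint)
    show "finite Bs" by (rule finBs)
    show "\<forall>i\<in>Bs. finite (insert i ` tilesof (A - i))" using fin finite_tilesof by auto
    show "\<forall>i\<in>Bs. \<forall>j\<in>Bs. i \<noteq> j \<longrightarrow> insert i ` tilesof (A - i) \<inter> insert j ` tilesof (A - j) = {}"
    proof (intro ballI impI)
      fix i j assume i: "i \<in> Bs" and j: "j \<in> Bs" and ij: "i \<noteq> j"
      show "insert i ` tilesof (A - i) \<inter> insert j ` tilesof (A - j) = {}"
      proof (rule ccontr)
        assume "insert i ` tilesof (A - i) \<inter> insert j ` tilesof (A - j) \<noteq> {}"
        then obtain P Q where P: "P \<in> tilesof (A - i)" and Q: "Q \<in> tilesof (A - j)" and e: "insert i P = insert j Q" by blast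
        have "j \<in> insert i P" using e by auto
        then have "j \<in> P" using ij by auto
        then have "j \<subseteq> A - i" using P by (auto simp: tilesof_def)
        moreover have "c \<in> i" "c \<in> j" using i j by (auto simp: Bs_def)
        ultimately show False by auto
      qed
    qed
  qed
  also have "\<dots> = (\<Sum>B\<in>Bs. tc (A - B))"
    by (rule sum.cong) (auto simp: tc_def card_image inj)
  finally show ?thesis by (simp add: Bs_def)
qed




definition up :: "cell \<Rightarrow> cell" where "up = (\<lambda>(x,y,z). (x,y,Suc z))"
definition dn :: "cell \<Rightarrow> cell" where "dn = (\<lambda>(x,y,z). (x,y,z - 1))"

lemma inj_up: "inj up" by (auto simp: inj_def up_def)

lemma dn_up[simp]: "dn (up c) = c" by (cases c) (auto simp: up_def dn_def)

lemma up_brick: "up ` brick_at x y z a b c = brick_at x y (Suc z) a b c"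
proof -
  have "up ` brick_at x y z a b c \<subseteq> brick_at x y (Suc z) a b c"
    by (auto simp: up_def brick_at_def)
  moreover have "brick_at x y (Suc z) a b c \<subseteq> up ` brick_at x y z a b c"
  proof
    fix p assume "p \<in> brick_at x y (Suc z) a b c"
    then obtain i j k where p: "p = (i,j,k)" "x \<le> i" "i < x + a" "y \<le> j" "j < y+b" "Suc z \<le> k" "k < Suc z + c"
      by (auto simp: brick_at_def)
    then have "p = up (i,j,k-1)" "(i,j,k-1) \<in> brick_at x y z a b c"
      by (auto simp: up_def brick_at_def)
    then show "p \<in> up ` brick_at x y z a b c" by blast
  qed
  ultimately show ?thesis by blast
qed

lemma is_brick_up: "is_brick 1 2 3 B \<Longrightarrow> is_brick 1 2 3 (up ` B)"
  unfolding is_brick_def by (metis up_brick)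

lemma is_brick_dn:
  assumes b: "is_brick 1 2 3 B" and s: "B \<subseteq> up ` A"
  shows "is_brick 1 2 3 (dn ` B)" "up ` dn ` B = B"
proof -
  obtain x y z d1 d2 d3 where o: "is_orientation 1 2 3 d1 d2 d3" and B: "B = brick_at x y z d1 d2 d3"
    using b by (auto simp: is_brick_def)
  have pos: "d1 > 0" "d2 > 0" "d3 > 0" using o by (auto simp: is_orientation_def)
  have "(x,y,z) \<in> B" using pos B by (auto simp: brick_at_def)
  then have "(x,y,z) \<in> up ` A" using s by auto
  then obtain z' where z: "z = Suc z'" by (auto simp: up_def)
  have e: "B = up ` brick_at x y z' d1 d2 d3" using B z up_brick by simp
  then have "dn ` B = brick_at x y z' d1 d2 d3" by (simp add: image_image)
  then show "is_brick 1 2 3 (dn ` B)" unfolding is_brick_def using o by blast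
  show "up ` dn ` B = B" using e by (simp add: image_image)
qed

lemma tilesof_up: "tilesof (up ` A) = image (image up) ` tilesof A"
proof
  show "image (image up) ` tilesof A \<subseteq> tilesof (up ` A)"
  proof clarify
    fix Q assume Q: "Q \<in> tilesof A"
    have 1: "\<forall>B\<in>image up ` Q. is_brick 1 2 3 B" using Q is_brick_up by (auto simp: tilesof_def)
    have 2: "\<forall>B\<in>image up ` Q. \<forall>C\<in>image up ` Q. B \<noteq> C \<longrightarrow> B \<inter> C = {}"
    proof (intro ballI impI)
      fix B' C' assume B': "B' \<in> image up ` Q" and C': "C' \<in> image up ` Q" and ne: "B' \<noteq> C'"
      then obtain B C where B: "B \<in> Q" and C: "C \<in> Q" and e: "B' = up ` B" "C' = up ` C" by blast
      have "B \<noteq> C" using ne e by auto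
      then have "B \<inter> C = {}" using Q B C by (auto simp: tilesof_def)
      moreover have "up ` B \<inter> up ` C = up ` (B \<inter> C)" using inj_up by (simp add: image_Int)
      ultimately show "B' \<inter> C' = {}" using e by auto
    qed
    have 3: "\<Union>(image up ` Q) = up ` A" using Q by (auto simp: tilesof_def)
    show "image up ` Q \<in> tilesof (up ` A)" using 1 2 3 by (simp add: tilesof_def)
  qed
next
  show "tilesof (up ` A) \<subseteq> image (image up) ` tilesof A"
  proof
    fix P assume P: "P \<in> tilesof (up ` A)"
    have bs: "\<And>B. B \<in> P \<Longrightarrow> is_brick 1 2 3 B \<and> B \<subseteq> up ` A" using P by (auto simp: tilesof_def)
    define Q where "Q = image dn ` P"
    have PQ: "P = image up ` Q"
    proof -
      have "image up ` Q = (\<lambda>B. up ` dn ` B) ` P" by (simp add: Q_def image_image)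
      also have "\<dots> = (\<lambda>B. B) ` P" 
      proof (rule image_cong)
        fix B assume "B \<in> P"
        then have "is_brick 1 2 3 B" "B \<subseteq> up ` A" using bs by auto
        then show "up ` dn ` B = B" by (rule is_brick_dn(2))
      qed simp
      finally show ?thesis by simp
    qed
    have 1: "\<forall>B\<in>Q. is_brick 1 2 3 B" unfolding Q_def
    proof
      fix B' assume "B' \<in> image dn ` P"
      then obtain B where "B \<in> P" "B' = dn ` B" by blast
      then show "is_brick 1 2 3 B'" using bs is_brick_dn(1) by blast
    qed
    have 2: "\<forall>B\<in>Q. \<forall>C\<in>Q. B \<noteq> C \<longrightarrow> B \<inter> C = {}"
    proof (intro ballI impI)
      fix B C assume B: "B \<in> Q" and C: "C \<in> Q" and ne: "B \<noteq> C"
      have "up ` B \<in> P" "up ` C \<in> P" using B C PQ by auto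
      moreover have "up ` B \<noteq> up ` C" using ne inj_up by (metis inj_image_eq_iff)
      ultimately have "up ` B \<inter> up ` C = {}" using P by (auto simp: tilesof_def)
      then show "B \<inter> C = {}" using inj_up by (metis image_Int image_is_empty)
    qed
    have "up ` \<Union>Q = \<Union>P" using PQ by auto
    also have "\<dots> = up ` A" using P by (auto simp: tilesof_def)
    finally have 3: "\<Union>Q = A" using inj_up by (simp add: inj_image_eq_iff)
    have "Q \<in> tilesof A" using 1 2 3 by (simp add: tilesof_def)
    then show "P \<in> image (image up) ` tilesof A" using PQ by blast
  qed
qed

lemma tc_up: "tc (up ` A) = tc A"
proof -
  have i1: "inj (image up)" by (meson inj_up inj_image_eq_iff injI)
  have "inj (image (image up))" by (rule injI) (use i1 inj_image_eq_iff in meson)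
  then have "inj_on (image (image up)) (tilesof A)" by (rule inj_on_subset) simp
  then show ?thesis unfolding tc_def tilesof_up by (rule card_image)
qed




definition R :: "cell set \<Rightarrow> nat \<Rightarrow> cell set" where
  "R S m = {(x,y,z). x < 3 \<and> y < 3 \<and> z < m} - S"

definition g :: "cell set \<Rightarrow> nat \<Rightarrow> nat" where "g S m = tc (R S m)"

lemma R_Un: "R (S \<union> B) m = R S m - B" by (auto simp: R_def)

lemma finite_R: "finite (R S m)"
proof -
  have "R S m \<subseteq> {0..<3} \<times> {0..<3} \<times> {0..<m}" by (auto simp: R_def)
  then show ?thesis by (rule finite_subset) auto
qed

lemma g0: "g S 0 = 1"
proof -
  have "R S 0 = {}" by (auto simp: R_def)
  then show ?thesis by (simp add: g_def tc_empty)
qed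

lemma gshift:
  assumes "\<forall>x<3. \<forall>y<3. (x,y,0) \<in> S"
  shows "g S (Suc m) = g {(x,y,z). (x,y,Suc z) \<in> S} m"
proof -
  have "R S (Suc m) = up ` R {(x,y,z). (x,y,Suc z) \<in> S} m"
  proof
    show "R S (Suc m) \<subseteq> up ` R {(x,y,z). (x,y,Suc z) \<in> S} m"
    proof
      fix p assume p: "p \<in> R S (Suc m)"
      obtain x y z where pe: "p = (x,y,z)" by (cases p)
      have xy: "x < 3" "y < 3" "(x,y,z) \<notin> S" using p pe by (auto simp: R_def)
      have "z \<noteq> 0"
      proof
        assume "z = 0"
        then show False using xy assms by blast
      qed
      then obtain z' where "z = Suc z'" by (cases z) auto
      then have "p = up (x,y,z')" "(x,y,z') \<in> R {(x,y,z). (x,y,Suc z) \<in> S} m"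
        using p pe by (auto simp: up_def R_def)
      then show "p \<in> up ` R {(x,y,z). (x,y,Suc z) \<in> S} m" by blast
    qed
  next
    show "up ` R {(x,y,z). (x,y,Suc z) \<in> S} m \<subseteq> R S (Suc m)"
      by (auto simp: up_def R_def)
  qed
  then show ?thesis by (simp add: g_def tc_up)
qed

definition orl :: "(nat \<times> nat \<times> nat) list" where
  "orl = [(1,2,3),(1,3,2),(2,1,3),(2,3,1),(3,1,2),(3,2,1)]"

lemma orient_orl: "is_orientation 1 2 3 a b c \<longleftrightarrow> (a,b,c) \<in> set orl"
  by (auto simp: is_orientation_def orl_def)

lemma card_proj:
  assumes "a > 0" "b > 0" "c > 0"
  shows "card (fst ` brick_at x y z a b c) = a" "card ((fst \<circ> snd) ` brick_at x y z a b c) = b"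
    "card ((snd \<circ> snd) ` brick_at x y z a b c) = c"
proof -
  have "fst ` brick_at x y z a b c = {x..<x+a}"
    using assms by (auto simp: brick_at_def image_iff) 
  then show "card (fst ` brick_at x y z a b c) = a" by simp
  have "(fst \<circ> snd) ` brick_at x y z a b c = {y..<y+b}"
    using assms by (auto simp: brick_at_def image_iff) (metis le_refl less_add_same_cancel1)+
  then show "card ((fst \<circ> snd) ` brick_at x y z a b c) = b" by simp
  have "(snd \<circ> snd) ` brick_at x y z a b c = {z..<z+c}"
    using assms by (auto simp: brick_at_def image_iff) (metis le_refl less_add_same_cancel1)+
  then show "card ((snd \<circ> snd) ` brick_at x y z a b c) = c" by simp
qed

lemma orl_pos: "(a,b,c) \<in> set orl \<Longrightarrow> a > 0 \<and> b > 0 \<and> c > 0 \<and> a \<le> 3 \<and> b \<le> 3 \<and> c \<le> 3"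
  by (auto simp: orl_def)

lemma inj_brick: "inj_on (\<lambda>(a,b,c). brick_at x y z a b c) A" if "A \<subseteq> set orl"
proof (rule inj_onI)
  fix d d' assume 1: "d \<in> A" and 2: "d' \<in> A" and e0: "(\<lambda>(a,b,c). brick_at x y z a b c) d = (\<lambda>(a,b,c). brick_at x y z a b c) d'"
  obtain a b c where de: "d = (a,b,c)" by (cases d)
  obtain a' b' c' where de': "d' = (a',b',c')" by (cases d')
  have e: "brick_at x y z a b c = brick_at x y z a' b' c'" using e0 de de' by simp
  have 1: "(a,b,c) \<in> A" using 1 de by simp
  have 2: "(a',b',c') \<in> A" using 2 de' by simp
  have p1: "a > 0" "b > 0" "c > 0" using 1 that orl_pos by blast+
  have p2: "a' > 0" "b' > 0" "c' > 0" using 2 that orl_pos by blast+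
  show "d = d'" unfolding de de' using card_proj[OF p1, of x y z] card_proj[OF p2, of x y z] e by metis
qed

lemma gsplit:
  assumes cR: "(cx,cy,0) \<in> R S (Suc m)"
    and H: "\<forall>x y. x \<le> cx \<longrightarrow> y \<le> cy \<longrightarrow> (x,y) \<noteq> (cx,cy) \<longrightarrow> (x,y,0) \<notin> R S (Suc m)"
  shows "g S (Suc m) = (\<Sum>d\<in>{d\<in>set orl. (case d of (a,b,c) \<Rightarrow> brick_at cx cy 0 a b c) \<subseteq> R S (Suc m)}.
            g (S \<union> (case d of (a,b,c) \<Rightarrow> brick_at cx cy 0 a b c)) (Suc m))"
proof -
  let ?A = "R S (Suc m)"
  let ?br = "\<lambda>(a,b,c). brick_at cx cy 0 a b c"
  let ?D = "{d\<in>set orl. ?br d \<subseteq> ?A}"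
  have Bs: "{B. is_brick 1 2 3 B \<and> (cx,cy,0) \<in> B \<and> B \<subseteq> ?A} = ?br ` ?D"
  proof
    show "{B. is_brick 1 2 3 B \<and> (cx,cy,0) \<in> B \<and> B \<subseteq> ?A} \<subseteq> ?br ` ?D"
    proof clarify
      fix B assume b: "is_brick 1 2 3 B" and cB: "(cx,cy,0) \<in> B" and BA: "B \<subseteq> ?A"
      obtain x y z a bb c where o: "is_orientation 1 2 3 a bb c" and Be: "B = brick_at x y z a bb c"
        using b by (auto simp: is_brick_def)
      have d: "(a,bb,c) \<in> set orl" using o orient_orl by simp
      have pos: "a > 0" "bb > 0" "c > 0" using orl_pos[OF d] by auto
      have corner: "(x,y,z) \<in> B" using Be pos by (auto simp: brick_at_def)
      have le: "x \<le> cx" "y \<le> cy" "z \<le> 0" using cB Be by (auto simp: brick_at_def)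
      have "(x,y,0) \<in> ?A" using corner BA le by auto
      then have "x = cx" "y = cy" using H le by auto
      then have "B = ?br (a,bb,c)" using Be le by simp
      moreover have "(a,bb,c) \<in> ?D" using d BA calculation by simp
      ultimately show "B \<in> ?br ` ?D" by blast
    qed
  next
    show "?br ` ?D \<subseteq> {B. is_brick 1 2 3 B \<and> (cx,cy,0) \<in> B \<and> B \<subseteq> ?A}"
    proof
      fix B assume "B \<in> ?br ` ?D"
      then obtain a b c where d: "(a,b,c) \<in> set orl" and sub: "?br (a,b,c) \<subseteq> ?A" and Be: "B = ?br (a,b,c)" by auto
      have pos: "a > 0" "b > 0" "c > 0" using orl_pos[OF d] by auto
      have "is_brick 1 2 3 (brick_at cx cy 0 a b c)"
        unfolding is_brick_def using d orient_orl by blast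
      moreover have "(cx,cy,0) \<in> brick_at cx cy 0 a b c" using pos by (auto simp: brick_at_def)
      ultimately show "B \<in> {B. is_brick 1 2 3 B \<and> (cx,cy,0) \<in> B \<and> B \<subseteq> ?A}"
        using sub Be by simp
    qed
  qed
  have "g S (Suc m) = (\<Sum>B\<in>?br ` ?D. tc (?A - B))"
    unfolding g_def using tc_split[OF finite_R cR] Bs by simp
  also have "\<dots> = (\<Sum>d\<in>?D. tc (?A - ?br d))"
    by (rule sum.reindex_cong[OF inj_brick]) auto
  also have "\<dots> = (\<Sum>d\<in>?D. g (S \<union> ?br d) (Suc m))"
    by (rule sum.cong) (auto simp: g_def R_Un)
  finally show ?thesis .
qed




definition layer0l :: "cell list" where
  "layer0l = [(0,0,0),(1,0,0),(2,0,0),(0,1,0),(1,1,0),(2,1,0),(0,2,0),(1,2,0),(2,2,0)]"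

lemma first_layer0:
  assumes "filter P layer0l = (cx,cy,cz) # rest"
  shows "cz = 0 \<and> cx < 3 \<and> cy < 3 \<and> P (cx,cy,0) \<and> (\<forall>x y. x \<le> cx \<longrightarrow> y \<le> cy \<longrightarrow> (x,y) \<noteq> (cx,cy) \<longrightarrow> \<not> P (x,y,0))"
proof -
  obtain us vs where e: "layer0l = us @ (cx,cy,cz) # vs" and u: "\<forall>u\<in>set us. \<not> P u" and p: "P (cx,cy,cz)"
    using assms by (auto simp: filter_eq_Cons_iff)
  have le2: "\<And>x::nat. x \<le> 2 \<longleftrightarrow> x = 0 \<or> x = 1 \<or> x = 2" by auto
  have le1: "\<And>x::nat. x \<le> 1 \<longleftrightarrow> x = 0 \<or> x = 1" by auto
  from e show ?thesis using u p unfolding layer0l_def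
    by (auto simp: append_eq_Cons_conv Cons_eq_append_conv le2 le1 le_Suc_eq)
qed

lemma none_layer0:
  assumes "filter P layer0l = []"
  shows "\<forall>x<3. \<forall>y<3. \<not> P (x,y,0)"
proof -
  have l3: "\<And>x::nat. x < 3 \<longleftrightarrow> x = 0 \<or> x = 1 \<or> x = 2" by auto
  show ?thesis using assms unfolding layer0l_def by (auto simp: l3 split: if_splits)
qed




definition brl :: "nat \<Rightarrow> nat \<Rightarrow> nat \<times> nat \<times> nat \<Rightarrow> cell list" where
  "brl cx cy d = (case d of (a,b,c) \<Rightarrow> [(i,j,k). i \<leftarrow> [cx..<cx+a], j \<leftarrow> [cy..<cy+b], k \<leftarrow> [0..<c]])"

lemma set_brl: "set (brl cx cy d) = (case d of (a,b,c) \<Rightarrow> brick_at cx cy 0 a b c)"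
  by (cases d) (auto simp: brl_def brick_at_def)

definition fits :: "nat \<Rightarrow> cell list \<Rightarrow> nat \<Rightarrow> nat \<Rightarrow> nat \<times> nat \<times> nat \<Rightarrow> bool" where
  "fits b xs cx cy d = list_all (\<lambda>p. case p of (i,j,k) \<Rightarrow> i < 3 \<and> j < 3 \<and> k < b \<and> p \<notin> set xs) (brl cx cy d)"

lemma fits_iff:
  assumes d: "d \<in> set orl"
  shows "fits (min (Suc m) 3) xs cx cy d \<longleftrightarrow> (case d of (a,b,c) \<Rightarrow> brick_at cx cy 0 a b c) \<subseteq> R (set xs) (Suc m)"
proof -
  obtain a b c where de: "d = (a,b,c)" by (cases d)
  have c3: "c \<le> 3" using orl_pos[of a b c] d de by simp
  let ?P = "\<lambda>p. case p of (i, j, k) \<Rightarrow> i < 3 \<and> j < 3 \<and> k < min (Suc m) 3 \<and> p \<notin> set xs"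
  have eqv: "\<forall>p\<in>brick_at cx cy 0 a b c. ?P p \<longleftrightarrow> p \<in> R (set xs) (Suc m)"
  proof
    fix p assume p: "p \<in> brick_at cx cy 0 a b c"
    obtain i j k where pe: "p = (i,j,k)" by (cases p)
    have "k < 3" using p pe c3 by (auto simp: brick_at_def)
    then have kk: "k < min (Suc m) 3 \<longleftrightarrow> k < Suc m" by linarith
    show "?P p \<longleftrightarrow> p \<in> R (set xs) (Suc m)"
      unfolding pe R_def using kk by simp
  qed
  have "fits (min (Suc m) 3) xs cx cy d \<longleftrightarrow> (\<forall>p\<in>brick_at cx cy 0 a b c. ?P p)"
    unfolding fits_def list_all_iff set_brl de by (simp only: prod.case)
  also have "\<dots> \<longleftrightarrow> (\<forall>p\<in>brick_at cx cy 0 a b c. p \<in> R (set xs) (Suc m))"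
  proof (rule ball_cong[OF refl])
    fix p assume "p \<in> brick_at cx cy 0 a b c"
    then show "?P p \<longleftrightarrow> p \<in> R (set xs) (Suc m)" by (rule eqv[rule_format])
  qed
  also have "\<dots> \<longleftrightarrow> brick_at cx cy 0 a b c \<subseteq> R (set xs) (Suc m)" by (simp only: subset_iff Ball_def)
  finally show ?thesis using de by simp
qed

definition downl :: "cell list \<Rightarrow> cell list" where
  "downl xs = sort (remdups (map (\<lambda>(x,y,z). (x,y,z - 1)) (filter (\<lambda>(x,y,z). 0 < z) xs)))"

lemma set_downl: "set (downl xs) = {(x,y,z). (x,y,Suc z) \<in> set xs}"
proof -
  have "set (downl xs) = (\<lambda>(x,y,z). (x,y,z - 1)) ` {p \<in> set xs. case p of (x,y,z) \<Rightarrow> 0 < z}"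
    by (simp add: downl_def)
  also have "\<dots> = {(x,y,z). (x,y,Suc z) \<in> set xs}"
  proof
    show "(\<lambda>(x,y,z). (x,y,z - 1)) ` {p \<in> set xs. case p of (x,y,z) \<Rightarrow> 0 < z} \<subseteq> {(x,y,z). (x,y,Suc z) \<in> set xs}"
      by (auto simp: Suc_pred)
    show "{(x,y,z). (x,y,Suc z) \<in> set xs} \<subseteq> (\<lambda>(x,y,z). (x,y,z - 1)) ` {p \<in> set xs. case p of (x,y,z) \<Rightarrow> 0 < z}"
    proof clarify
      fix a aa b assume "(a, aa, Suc b) \<in> set xs"
      then show "(a, aa, b) \<in> (\<lambda>(x,y,z). (x,y,z - 1)) ` {p \<in> set xs. case p of (x,y,z) \<Rightarrow> 0 < z}"
        by (intro image_eqI[of _ _ "(a,aa,Suc b)"]) auto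
    qed
  qed
  finally show ?thesis .
qed

fun seqo :: "'a list option list \<Rightarrow> 'a list option" where
  "seqo [] = Some []"
| "seqo (x # xs) = (case x of None \<Rightarrow> None | Some a \<Rightarrow> map_option ((@) a) (seqo xs))"

lemma seqo_sum:
  assumes "seqo (map F ds) = Some L"
    and "\<And>d l. d \<in> set ds \<Longrightarrow> F d = Some l \<Longrightarrow> h d = sum_list (map w l)"
  shows "sum_list (map h ds) = sum_list (map w L)"
  using assms
proof (induction ds arbitrary: L)
  case Nil then show ?case by simp
next
  case (Cons d ds)
  then obtain a L' where a: "F d = Some a" and L': "seqo (map F ds) = Some L'" and L: "L = a @ L'"
    by (auto split: option.splits)
  have "sum_list (map h ds) = sum_list (map w L')" using Cons.IH[OF L'] Cons.prems(2) by auto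
  moreover have "h d = sum_list (map w a)" using Cons.prems(2) a by auto
  ultimately show ?case using L by simp
qed

fun ex :: "nat \<Rightarrow> nat \<Rightarrow> cell list \<Rightarrow> cell list list option" where
  "ex b 0 xs = None"
| "ex b (Suc f) xs = (case filter (\<lambda>c. c \<notin> set xs) layer0l of
      [] \<Rightarrow> Some [downl xs]
    | (c # _) \<Rightarrow> seqo (map (\<lambda>d. ex b f (brl (fst c) (fst (snd c)) d @ xs))
                        (filter (fits b xs (fst c) (fst (snd c))) orl)))"

lemma distinct_orl: "distinct orl" by (simp add: orl_def)

lemma ex_correct:
  "ex (min (Suc m) 3) f xs = Some L \<Longrightarrow> g (set xs) (Suc m) = sum_list (map (\<lambda>ys. g (set ys) m) L)"
proof (induction f arbitrary: xs L)
  case 0 then show ?case by simp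
next
  case (Suc f)
  let ?b = "min (Suc m) 3"
  show ?case
  proof (cases "filter (\<lambda>c. c \<notin> set xs) layer0l")
    case Nil
    then have L: "L = [downl xs]" using Suc.prems by simp
    have "\<forall>x<3. \<forall>y<3. (x,y,0) \<in> set xs" using none_layer0[OF Nil] by simp
    then have "g (set xs) (Suc m) = g {(x,y,z). (x,y,Suc z) \<in> set xs} m" by (rule gshift)
    then show ?thesis using L set_downl by simp
  next
    case (Cons c rest)
    obtain cx cy cz where ce: "c = (cx,cy,cz)" by (cases c)
    have fl: "cz = 0 \<and> cx < 3 \<and> cy < 3 \<and> (cx,cy,0) \<notin> set xs \<and>
      (\<forall>x y. x \<le> cx \<longrightarrow> y \<le> cy \<longrightarrow> (x,y) \<noteq> (cx,cy) \<longrightarrow> (x,y,0) \<in> set xs)"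
      using first_layer0[of "\<lambda>c. c \<notin> set xs"] Cons ce by blast
    have cR: "(cx,cy,0) \<in> R (set xs) (Suc m)" using fl by (auto simp: R_def)
    have H: "\<forall>x y. x \<le> cx \<longrightarrow> y \<le> cy \<longrightarrow> (x,y) \<noteq> (cx,cy) \<longrightarrow> (x,y,0) \<notin> R (set xs) (Suc m)"
      using fl by (auto simp: R_def)
    let ?br = "\<lambda>d. case d of (a,b,c) \<Rightarrow> brick_at cx cy 0 a b c"
    let ?ds = "filter (fits ?b xs cx cy) orl"
    have S: "seqo (map (\<lambda>d. ex ?b f (brl cx cy d @ xs)) ?ds) = Some L"
      using Suc.prems Cons ce by simp
    have dsset: "{d\<in>set orl. ?br d \<subseteq> R (set xs) (Suc m)} = set ?ds"
      using fits_iff by auto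
    have "g (set xs) (Suc m) = (\<Sum>d\<in>set ?ds. g (set xs \<union> ?br d) (Suc m))"
      using gsplit[OF cR H] dsset by simp
    also have "\<dots> = sum_list (map (\<lambda>d. g (set xs \<union> ?br d) (Suc m)) ?ds)"
      by (rule sum.distinct_set_conv_list) (simp add: distinct_orl)
    also have "\<dots> = sum_list (map (\<lambda>ys. g (set ys) m) L)"
    proof (rule seqo_sum[OF S])
      fix d l assume "d \<in> set ?ds" and e: "ex ?b f (brl cx cy d @ xs) = Some l"
      have "g (set (brl cx cy d @ xs)) (Suc m) = sum_list (map (\<lambda>ys. g (set ys) m) l)"
        by (rule Suc.IH[OF e])
      moreover have "set (brl cx cy d @ xs) = set xs \<union> ?br d" using set_brl by auto
      ultimately show "g (set xs \<union> ?br d) (Suc m) = sum_list (map (\<lambda>ys. g (set ys) m) l)" by simp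
    qed
    finally show ?thesis .
  qed
qed




type_synonym wl = "(nat \<times> cell list) list"

fun insS :: "nat \<times> cell list \<Rightarrow> wl \<Rightarrow> wl" where
  "insS p [] = [p]"
| "insS (k,s) ((k',s') # L) = (if s = s' then (k + k', s) # L
     else if s < s' then (k,s) # (k',s') # L else (k',s') # insS (k,s) L)"

definition mergeS :: "wl \<Rightarrow> wl" where "mergeS L = foldr insS L []"

definition wsum :: "wl \<Rightarrow> nat \<Rightarrow> nat" where
  "wsum L m = sum_list (map (\<lambda>(k,xs). k * g (set xs) m) L)"

lemma wsum_Nil[simp]: "wsum [] m = 0" by (simp add: wsum_def)
lemma wsum_Cons[simp]: "wsum ((k,xs) # L) m = k * g (set xs) m + wsum L m" by (simp add: wsum_def)
lemma wsum_append[simp]: "wsum (A @ B) m = wsum A m + wsum B m" by (simp add: wsum_def)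

lemma wsum_insS: "wsum (insS p L) m = wsum (p # L) m"
proof (induction p L rule: insS.induct)
  case (1 p) then show ?case by simp
next
  case (2 k s k' s' L) then show ?case by (auto simp: algebra_simps)
qed

lemma wsum_mergeS: "wsum (mergeS L) m = wsum L m"
proof (induction L)
  case Nil then show ?case by (simp add: mergeS_def)
next
  case (Cons p L)
  obtain k xs where p: "p = (k,xs)" by (cases p)
  have "wsum (mergeS (p # L)) m = wsum (insS p (mergeS L)) m" by (simp add: mergeS_def)
  also have "\<dots> = wsum (p # mergeS L) m" by (rule wsum_insS)
  finally show ?case using Cons p by simp
qed

definition expW :: "nat \<Rightarrow> wl \<Rightarrow> wl" where
  "expW b L = mergeS (concat (map (\<lambda>(k,xs). map (\<lambda>ys. (k,ys)) (the (ex b 30 xs))) L))"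

definition okW :: "nat \<Rightarrow> wl \<Rightarrow> bool" where
  "okW b L = list_all (\<lambda>(k,xs). ex b 30 xs \<noteq> None) L"

lemma wsum_map_k: "wsum (map (\<lambda>ys. (k,ys)) l) m = k * sum_list (map (\<lambda>ys. g (set ys) m) l)"
  by (induction l) (auto simp: algebra_simps)

lemma expW_correct:
  assumes "okW (min (Suc m) 3) L"
  shows "wsum L (Suc m) = wsum (expW (min (Suc m) 3) L) m"
proof -
  have "wsum L (Suc m) = wsum (concat (map (\<lambda>(k,xs). map (\<lambda>ys. (k,ys)) (the (ex (min (Suc m) 3) 30 xs))) L)) m"
    using assms
  proof (induction L)
    case Nil then show ?case by simp
  next
    case (Cons p L)
    obtain k xs where p: "p = (k,xs)" by (cases p)
    obtain l where l: "ex (min (Suc m) 3) 30 xs = Some l" using Cons.prems p by (auto simp: okW_def)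
    have ih: "wsum L (Suc m) = wsum (concat (map (\<lambda>(k,xs). map (\<lambda>ys. (k,ys)) (the (ex (min (Suc m) 3) 30 xs))) L)) m"
      using Cons by (auto simp: okW_def)
    have "g (set xs) (Suc m) = sum_list (map (\<lambda>ys. g (set ys) m) l)" by (rule ex_correct[OF l])
    then show ?case using ih p l by (simp add: wsum_map_k)
  qed
  then show ?thesis by (simp add: expW_def wsum_mergeS)
qed

fun okAll :: "wl \<Rightarrow> nat \<Rightarrow> bool" where
  "okAll L 0 = True"
| "okAll L (Suc m) = (okW (min (Suc m) 3) L \<and> okAll (expW (min (Suc m) 3) L) m)"

fun wdesc :: "wl \<Rightarrow> nat \<Rightarrow> nat" where
  "wdesc L 0 = sum_list (map fst L)"
| "wdesc L (Suc m) = wdesc (expW (min (Suc m) 3) L) m"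

lemma wsum_0: "wsum L 0 = sum_list (map fst L)"
  by (induction L) (auto simp: g0)

lemma wdesc_correct: "okAll L m \<Longrightarrow> wsum L m = wdesc L m"
proof (induction m arbitrary: L)
  case 0 then show ?case by (simp add: wsum_0)
next
  case (Suc m) then show ?case using expW_correct by simp
qed

abbreviation E3 :: "wl \<Rightarrow> wl" where "E3 \<equiv> expW 3"

lemma iterE:
  assumes "list_all (\<lambda>j. okW 3 ((E3 ^^ j) L)) [0..<k]" and "2 \<le> m"
  shows "wsum L (m + k) = wsum ((E3 ^^ k) L) m"
  using assms(1)
proof (induction k arbitrary: L)
  case 0 then show ?case by simp
next
  case (Suc k)
  have all: "\<forall>j\<in>set [0..<Suc k]. okW 3 ((E3 ^^ j) L)" using Suc.prems by (simp only: list_all_iff)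
  then have ok0: "okW 3 L" by (drule_tac bspec[of _ _ 0]) auto
  have okr: "list_all (\<lambda>j. okW 3 ((E3 ^^ j) (E3 L))) [0..<k]"
    unfolding list_all_iff
  proof
    fix j assume "j \<in> set [0..<k]"
    then have "Suc j \<in> set [0..<Suc k]" unfolding set_upt by simp
    with all have ok: "okW 3 ((E3 ^^ Suc j) L)" by (rule bspec)
    have eq: "(E3 ^^ Suc j) L = (E3 ^^ j) (E3 L)" by (simp only: funpow_Suc_right o_apply)
    show "okW 3 ((E3 ^^ j) (E3 L))" using ok unfolding eq .
  qed
  have m3: "min (Suc (m + k)) 3 = 3" using assms(2) by simp
  have "wsum L (m + Suc k) = wsum L (Suc (m + k))" by simp
  also have "\<dots> = wsum (E3 L) (m + k)" using expW_correct[of "m+k" L] ok0 m3 by simp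
  also have "\<dots> = wsum ((E3 ^^ k) (E3 L)) m" by (rule Suc.IH[OF okr])
  also have "\<dots> = wsum ((E3 ^^ Suc k) L) m" by (simp only: funpow_Suc_right o_apply)
  finally show ?case .
qed

definition L0 :: wl where "L0 = [(1, [])]"

lemma wsum_L0: "wsum L0 m = g {} m" by (simp add: L0_def)

definition scl :: "nat \<Rightarrow> wl \<Rightarrow> wl" where "scl c L = map (\<lambda>(k,xs). (c*k, xs)) L"

lemma wsum_scl: "wsum (scl c L) m = c * wsum L m"
  by (induction L) (auto simp: scl_def algebra_simps)




lemma ok6: "list_all (\<lambda>j. okW 3 ((E3 ^^ j) L0)) [0..<6]" by code_simp
lemma ok4: "list_all (\<lambda>j. okW 3 ((E3 ^^ j) L0)) [0..<4]" by code_simp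
lemma ok2: "list_all (\<lambda>j. okW 3 ((E3 ^^ j) L0)) [0..<2]" by code_simp

lemma canon: "mergeS ((E3 ^^ 6) L0) = mergeS (scl 7 ((E3 ^^ 4) L0) @ scl 22 ((E3 ^^ 2) L0) @ scl 36 L0)"
  by code_simp

lemma rec_g:
  assumes "2 \<le> n"
  shows "g {} (n + 6) = 7 * g {} (n + 4) + 22 * g {} (n + 2) + 36 * g {} n"
proof -
  have "g {} (n + 6) = wsum ((E3 ^^ 6) L0) n" using iterE[OF ok6 assms] wsum_L0 by simp
  also have "\<dots> = wsum (mergeS ((E3 ^^ 6) L0)) n" by (simp add: wsum_mergeS)
  also have "\<dots> = wsum (scl 7 ((E3 ^^ 4) L0) @ scl 22 ((E3 ^^ 2) L0) @ scl 36 L0) n"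
    unfolding canon wsum_mergeS ..
  also have "\<dots> = 7 * wsum ((E3 ^^ 4) L0) n + 22 * wsum ((E3 ^^ 2) L0) n + 36 * wsum L0 n"
    by (simp add: wsum_scl)
  also have "\<dots> = 7 * g {} (n + 4) + 22 * g {} (n + 2) + 36 * g {} n"
    using iterE[OF ok4 assms] iterE[OF ok2 assms] wsum_L0 by simp
  finally show ?thesis .
qed

lemma okA2: "okAll L0 2" by code_simp
lemma okA4: "okAll L0 4" by code_simp
lemma okA6: "okAll L0 6" by code_simp
lemma wd2: "wdesc L0 2 = 6" by code_simp
lemma wd4: "wdesc L0 4 = 64" by code_simp
lemma wd6: "wdesc L0 6 = 616" by code_simp

lemma g_vals: "g {} 0 = 1" "g {} 2 = 6" "g {} 4 = 64" "g {} 6 = 616"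
  using g0 wdesc_correct[OF okA2] wdesc_correct[OF okA4] wdesc_correct[OF okA6] wd2 wd4 wd6 wsum_L0
  by auto





lemma card_brick: "is_brick 1 2 3 B \<Longrightarrow> card B = 6 \<and> finite B"
  by (auto simp: is_brick_def is_orientation_def brick_at_def card_cartesian_product)

lemma card_tiling:
  assumes P: "P \<in> tilesof A" and fA: "finite A"
  shows "card A = 6 * card P"
proof -
  have finP: "finite P" by (rule finite_subset[of _ "Pow A"]) (use P fA in \<open>auto simp: tilesof_def\<close>)
  have pw: "pairwise disjnt P" using P by (auto simp: tilesof_def pairwise_def disjnt_def)
  have "card A = card (\<Union>P)" using P by (simp add: tilesof_def)
  also have "\<dots> = sum card P" by (rule card_Union_disjoint[OF pw]) (use P card_brick in \<open>auto simp: tilesof_def\<close>)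
  also have "\<dots> = sum (\<lambda>_. 6) P" by (rule sum.cong) (use P card_brick in \<open>auto simp: tilesof_def\<close>)
  finally show ?thesis by simp
qed

lemma box_R: "box_cells 3 3 n = R {} n"
  by (auto simp: box_cells_def R_def)

lemma T_eq:
  assumes "3 dvd N"
  shows "T N = g {} (2 * N div 3)"
proof -
  let ?n = "2 * N div 3"
  have til: "tilings 3 3 ?n 1 2 3 = tilesof (R {} ?n)"
    by (simp add: tilings_def tilesof_def box_R)
  have cardR: "card (R {} ?n) = 6 * N"
  proof -
    have "R {} ?n = {0..<3} \<times> {0..<3} \<times> {0..<?n}" by (auto simp: R_def)
    then have "card (R {} ?n) = 9 * ?n" by (simp add: card_cartesian_product)
    also have "\<dots> = 6 * N" using assms by auto
    finally show ?thesis .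
  qed
  have "{P \<in> tilings 3 3 ?n 1 2 3. card P = N} = tilesof (R {} ?n)"
    using card_tiling[OF _ finite_R] cardR til by auto
  then show ?thesis using assms by (simp add: T_def g_def tc_def)
qed

lemma T_not: "\<not> 3 dvd N \<Longrightarrow> T N = 0" by (simp add: T_def)

lemma T3: "T (3 * j) = g {} (2 * j)"
  using T_eq[of "3*j"] by simp

lemma T_vals: "T 0 = 1" "T 3 = 6" "T 6 = 64" "T 9 = 616"
proof -
  have "T (3*0) = g {} (2*0)" "T (3*1) = g {} (2*1)" "T (3*2) = g {} (2*2)" "T (3*3) = g {} (2*3)"
    by (rule T3)+
  then have "T 0 = g {} 0" "T 3 = g {} 2" "T 6 = g {} 4" "T 9 = g {} 6" by simp_all
  then show "T 0 = 1" "T 3 = 6" "T 6 = 64" "T 9 = 616" using g_vals by simp_all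
qed

lemma T_rec: "j \<ge> 3 \<Longrightarrow> T (3 * j) = 7 * T (3 * (j - 1)) + 22 * T (3 * (j - 2)) + 36 * T (3 * (j - 3))"
proof -
  assume j: "j \<ge> 3"
  show ?thesis
  proof (cases "j = 3")
    case True
    then show ?thesis using T_vals by simp
  next
    case False
    then have j4: "j \<ge> 4" using j by simp
    define n where "n = 2 * j - 6"
    have n2: "2 \<le> n" using j4 by (simp add: n_def)
    have e: "2 * j = n + 6" "2 * (j - 1) = n + 4" "2 * (j - 2) = n + 2" "2 * (j - 3) = n"
      using j4 by (auto simp: n_def)
    show ?thesis unfolding T3 e using rec_g[OF n2] .
  qed
qed

theorem mainTheorem19:
  shows "Abs_fps (\<lambda>N. of_nat (T N) :: rat) =
    (1 - fps_X ^ 3) / (1 - 7 * fps_X ^ 3 - 22 * fps_X ^ 6 - 36 * fps_X ^ 9)"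
proof -
  define A where "A = Abs_fps (\<lambda>N. of_nat (T N) :: rat)"
  define D :: "rat fps" where "D = 1 - 7 * fps_X ^ 3 - 22 * fps_X ^ 6 - 36 * fps_X ^ 9"
  have D0: "D $ 0 \<noteq> 0" by (simp add: D_def)
  have AD: "A * D = A - fps_const 7 * (fps_X ^ 3 * A) - fps_const 22 * (fps_X ^ 6 * A) - fps_const 36 * (fps_X ^ 9 * A)"
    by (simp add: D_def algebra_simps numeral_fps_const)
  have nth: "(A * D) $ N = of_nat (T N) - (if N < 3 then 0 else 7 * of_nat (T (N - 3)))
      - (if N < 6 then 0 else 22 * of_nat (T (N - 6))) - (if N < 9 then 0 else 36 * of_nat (T (N - 9)))" for N
    unfolding AD by (simp add: fps_X_power_mult_nth A_def)
  have num: "(1 - fps_X ^ 3 :: rat fps) $ N = (if N = 0 then 1 else if N = 3 then -1 else 0)" for N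
    by (simp add: fps_X_power_nth)
  have eq: "A * D = 1 - fps_X ^ 3"
  proof (rule fps_ext)
    fix N
    show "(A * D) $ N = (1 - fps_X ^ 3 :: rat fps) $ N"
    proof (cases "3 dvd N")
      case False
      have "\<not> 3 dvd (N - 3)" if "N \<ge> 3" using False that by presburger
      moreover have "\<not> 3 dvd (N - 6)" if "N \<ge> 6" using False that by presburger
      moreover have "\<not> 3 dvd (N - 9)" if "N \<ge> 9" using False that by presburger
      moreover have "N \<noteq> 0" "N \<noteq> 3" using False by (auto intro: Nat.gr0I)
      ultimately show ?thesis unfolding nth num using False by (auto simp: T_not not_less)
    next
      case True
      then obtain j where N: "N = 3 * j" by auto
      show ?thesis
      proof (cases "j \<ge> 3")
        case True
        have r: "T (3 * j) = 7 * T (3 * (j - 1)) + 22 * T (3 * (j - 2)) + 36 * T (3 * (j - 3))" by (rule T_rec[OF True])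
        have e: "3 * j - 3 = 3 * (j - 1)" "3 * j - 6 = 3 * (j - 2)" "3 * j - 9 = 3 * (j - 3)" by auto
        show ?thesis unfolding nth num N e using True r by (simp add: of_nat_add of_nat_mult)
      next
        case False
        then have "j = 0 \<or> j = 1 \<or> j = 2" by auto
        then show ?thesis unfolding nth num N using T_vals by auto
      qed
    qed
  qed
  have "(1 - fps_X ^ 3) / D = (1 - fps_X ^ 3) * inverse D" by (rule fps_divide_unit[OF D0])
  also have "\<dots> = A * (D * inverse D)" by (simp add: eq[symmetric] mult.assoc)
  also have "\<dots> = A" using inverse_mult_eq_1'[OF D0] by simp
  finally show ?thesis by (simp add: A_def D_def)
qed


end
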